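(* Let $X_1,X_2,Y_1,Y_2$ be totally ordered alphabets. For every $M\in\mathrm{Pack}$, \[\iota_{(X_1,X_2),(Y_1,Y_2)}\big(\Phi_M(X_1X_2,Y_1Y_2)\big)=\sum_{\substack{(\sigma',\sigma'')\in \mathrm{Adm}(\mathrm{row}(M))\\ (\tau',\tau'')\in \mathrm{Adm}(\mathrm{col}(M))}} \Phi_{\mu(\sigma')M\mu(\tau')^\top}(X_1,Y_1)\otimes \Phi_{\mu(\sigma'')M\mu(\tau'')^\top}(X_2,Y_2).\]
   Context: A totally ordered alphabet is a finite or countable set with a total order. $\mathbf{A}_{X,Y}=\mathbb{Q}[[t_{i,j}\mid i\in X,\ j\in Y]]$. A packed matrix is a matrix with entries in $\mathbb{N}$ with no zero row and no zero column (the empty matrix $1$ is packed); $\mathrm{Pack}$ is their set; $\mathrm{row}(M),\mathrm{col}(M)$ are the numbers of rows and columns. For $M=(m_{r,s})\in\mathrm{Pack}$ with $k$ rows and $l$ columns, $\Phi_M(X,Y)=\sum_{i_1<\dots<i_k\in X,\ j_1<\dots<j_l\in Y}\prod_{r,s} t_{i_r,j_s}^{m_{r,s}}$, extended linearly. For $\alpha:[k]\to[n]$, $\mu(\alpha)$ is the $n\times k$ matrix with $\mu(\alpha)_{i,j}=\delta_{i,\alpha(j)}$. $XY$ denotes $X\times Y$ with the lexicographic order ($(x,y)\leq(x',y')$ iff $x<x'$, or $x=x'$ and $y\leq y'$). $\iota_{(X_1,X_2),(Y_1,Y_2)}:\mathbf{A}_{X_1X_2,Y_1Y_2}\to\mathbf{A}_{X_1,Y_1}\hat\otimes\mathbf{A}_{X_2,Y_2}$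 is the continuous algebra map $t_{(x_1,x_2),(y_1,y_2)}\mapsto t_{x_1,y_1}\otimes t_{x_2,y_2}$. For $k\in\mathbb{N}$, $\mathrm{Adm}(k)$ is the set of pairs $(\sigma',\sigma'')$ of surjective maps $\sigma':[k]\twoheadrightarrow[k']$, $\sigma'':[k]\twoheadrightarrow[k'']$ (some $k',k''$) such that $\sigma'(1)\leq\dots\leq\sigma'(k)$ and, for all $i<j$ in $[k]$ with $\sigma'(i)=\sigma'(j)$, one has $\sigma''(i)<\sigma''(j)$. *)

theory Defs
  imports "Jordan_Normal_Form.Matrix" "HOL-Library.Product_Lexorder" "HOL-Library.Countable_Set"
begin

text \<open>Formal power series over Q in commuting variables t_v (v :: 'v) are represented by their
coefficient function on monomials (exponent functions 'v \<Rightarrow> nat); only finitely supported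
exponent functions are genuine monomials, all other coefficients are 0 in the series used below.
An element of A_{X,Y} has variables indexed by pairs (i,j).\<close>

type_synonym ('x,'y) pseries = "('x \<times> 'y \<Rightarrow> nat) \<Rightarrow> rat"

text \<open>Completed tensor product A_{X1,Y1} (hat-tensor) A_{X2,Y2}: power series in the
disjoint union of both variable sets, i.e. coefficient functions on pairs of monomials.\<close>

type_synonym ('x1,'y1,'x2,'y2) tpseries = "('x1 \<times> 'y1 \<Rightarrow> nat) \<times> ('x2 \<times> 'y2 \<Rightarrow> nat) \<Rightarrow> rat"

definition tensor :: "('x1,'y1) pseries \<Rightarrow> ('x2,'y2) pseries \<Rightarrow> ('x1,'y1,'x2,'y2) tpseries" where
  "tensor f g = (\<lambda>(m1, m2). f m1 * g m2)"

definition packed :: "nat mat \<Rightarrow> bool" where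
  "packed M \<longleftrightarrow> (\<forall>r<dim_row M. \<exists>s<dim_col M. M $$ (r,s) \<noteq> 0)
              \<and> (\<forall>s<dim_col M. \<exists>r<dim_row M. M $$ (r,s) \<noteq> 0)"

definition monom_of :: "nat mat \<Rightarrow> 'x list \<Rightarrow> 'y list \<Rightarrow> ('x \<times> 'y \<Rightarrow> nat)" where
  "monom_of M is js = (\<lambda>(i,j). \<Sum>r<dim_row M. \<Sum>s<dim_col M.
       if is ! r = i \<and> js ! s = j then M $$ (r,s) else 0)"

text \<open>Phi_M(X,Y) = sum over i_1<...<i_k in X, j_1<...<j_l in Y of that monomial;
its coefficient at m is the number of such pairs of sequences producing m.\<close>

definition Phi :: "nat mat \<Rightarrow> 'x::linorder set \<Rightarrow> 'y::linorder set \<Rightarrow> ('x,'y) pseries" where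
  "Phi M X Y = (\<lambda>m. of_nat (card {(is, js).
       length is = dim_row M \<and> sorted_wrt (<) is \<and> set is \<subseteq> X \<and>
       length js = dim_col M \<and> sorted_wrt (<) js \<and> set js \<subseteq> Y \<and>
       monom_of M is js = m}))"

text \<open>The algebra map iota: t_{(x1,x2),(y1,y2)} \<mapsto> t_{x1,y1} \<otimes> t_{x2,y2}, on coefficients.
The monomial t^m is sent to the pair of monomials (proj1 m, proj2 m).\<close>

definition proj1 :: "(('x1 \<times> 'x2) \<times> ('y1 \<times> 'y2) \<Rightarrow> nat) \<Rightarrow> ('x1 \<times> 'y1 \<Rightarrow> nat)" where
  "proj1 m = (\<lambda>(x1,y1). \<Sum>v\<in>{v. m v \<noteq> 0 \<and> fst (fst v) = x1 \<and> fst (snd v) = y1}. m v)"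

definition proj2 :: "(('x1 \<times> 'x2) \<times> ('y1 \<times> 'y2) \<Rightarrow> nat) \<Rightarrow> ('x2 \<times> 'y2 \<Rightarrow> nat)" where
  "proj2 m = (\<lambda>(x2,y2). \<Sum>v\<in>{v. m v \<noteq> 0 \<and> snd (fst v) = x2 \<and> snd (snd v) = y2}. m v)"

definition iota :: "('x1 \<times> 'x2, 'y1 \<times> 'y2) pseries \<Rightarrow> ('x1,'y1,'x2,'y2) tpseries" where
  "iota F = (\<lambda>(m1, m2). \<Sum>m\<in>{m. finite {v. m v \<noteq> 0} \<and> proj1 m = m1 \<and> proj2 m = m2}. F m)"

text \<open>mu(alpha) for alpha : [k] -> [n] surjective (0-indexed); n is the size of the image.\<close>

definition mu :: "nat \<Rightarrow> (nat \<Rightarrow> nat) \<Rightarrow> nat mat" where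
  "mu k \<alpha> = mat (card (\<alpha> ` {..<k})) k (\<lambda>(i,j). if i = \<alpha> j then 1 else 0)"

text \<open>Adm(k): pairs of surjections [k] ->> [k'], [k] ->> [k''] (normalised to 0 outside [k]),
the first weakly increasing, the second strictly increasing on each fibre of the first.\<close>

definition Adm :: "nat \<Rightarrow> ((nat \<Rightarrow> nat) \<times> (nat \<Rightarrow> nat)) set" where
  "Adm k = {(s1, s2).
      (\<exists>k1. s1 ` {..<k} = {..<k1}) \<and> (\<exists>k2. s2 ` {..<k} = {..<k2}) \<and>
      (\<forall>i\<ge>k. s1 i = 0 \<and> s2 i = 0) \<and>
      (\<forall>i j. i < j \<and> j < k \<longrightarrow> s1 i \<le> s1 j) \<and>
      (\<forall>i j. i < j \<and> j < k \<and> s1 i = s1 j \<longrightarrow> s2 i < s2 j)}"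

end

theory Submission
  imports Defs
begin


definition mon :: "nat mat \<Rightarrow> (nat \<Rightarrow> 'x) \<Rightarrow> (nat \<Rightarrow> 'y) \<Rightarrow> ('x \<times> 'y \<Rightarrow> nat)" where
  "mon M f g = (\<lambda>(i,j). \<Sum>r<dim_row M. \<Sum>s<dim_col M. if f r = i \<and> g s = j then M $$ (r,s) else 0)"

lemma monom_of_mon: "monom_of M is js = mon M (nth is) (nth js)"
  unfolding monom_of_def mon_def by simp

lemma mon_cong: "(\<And>r. r < dim_row M \<Longrightarrow> f r = f' r) \<Longrightarrow> (\<And>s. s < dim_col M \<Longrightarrow> g s = g' s)
   \<Longrightarrow> mon M f g = mon M f' g'"
  unfolding mon_def by (intro ext) (auto intro!: sum.cong)

lemma mon_supp: "{v. mon M f g v \<noteq> 0} \<subseteq> (\<lambda>(r,s). (f r, g s)) ` ({..<dim_row M} \<times> {..<dim_col M})"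
proof
  fix v assume v: "v \<in> {v. mon M f g v \<noteq> 0}"
  show "v \<in> (\<lambda>(r,s). (f r, g s)) ` ({..<dim_row M} \<times> {..<dim_col M})"
  proof (rule ccontr)
    assume nv: "v \<notin> (\<lambda>(r,s). (f r, g s)) ` ({..<dim_row M} \<times> {..<dim_col M})"
    have "\<And>r s. r < dim_row M \<Longrightarrow> s < dim_col M \<Longrightarrow> \<not> (f r = fst v \<and> g s = snd v)"
    proof
      fix r s assume "r < dim_row M" "s < dim_col M" "f r = fst v \<and> g s = snd v"
      then have "v \<in> (\<lambda>(r,s). (f r, g s)) ` ({..<dim_row M} \<times> {..<dim_col M})"
        by (intro image_eqI[of _ _ "(r,s)"]) auto
      with nv show False by blast
    qed
    then have "mon M f g v = 0" unfolding mon_def by (simp add: split_beta) blast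
    with v show False by simp
  qed
qed

lemma finite_mon_supp: "finite {v. mon M f g v \<noteq> 0}"
  by (rule finite_subset[OF mon_supp]) auto

lemma mon_ge: "r < dim_row M \<Longrightarrow> s < dim_col M \<Longrightarrow> M $$ (r,s) \<le> mon M f g (f r, g s)"
  unfolding mon_def
  apply simp
  apply (rule order.trans[OF _ member_le_sum[of r, where A="{..<dim_row M}"]])
    apply (rule order.trans[OF _ member_le_sum[of s, where A="{..<dim_col M}"]])
  by auto

lemma sum_V:
  fixes h :: "'v \<Rightarrow> nat"
  assumes "finite W" "{v. h v \<noteq> 0} \<subseteq> W"
  shows "(\<Sum>v\<in>{v. h v \<noteq> 0 \<and> P v}. h v) = (\<Sum>v\<in>W \<inter> {v. P v}. h v)"
  by (rule sum.mono_neutral_left) (use assms in auto)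

lemma proj1_mon: "proj1 (mon M f g) = mon M (fst \<circ> f) (fst \<circ> g)"
proof (intro ext, clarify)
  fix x y
  let ?W = "(\<lambda>(r,s). (f r, g s)) ` ({..<dim_row M} \<times> {..<dim_col M})"
  let ?V = "?W \<inter> {v. fst (fst v) = x \<and> fst (snd v) = y}"
  have fW: "finite ?V" by auto
  have "proj1 (mon M f g) (x,y) = (\<Sum>v\<in>?V. mon M f g v)"
    unfolding proj1_def using sum_V[OF _ mon_supp, where P="\<lambda>v. fst (fst v) = x \<and> fst (snd v) = y"]
    by simp
  also have "\<dots> = (\<Sum>v\<in>?V. \<Sum>r<dim_row M. \<Sum>s<dim_col M. if (f r, g s) = v then M $$ (r,s) else 0)"
    unfolding mon_def by (intro sum.cong refl) (auto simp: prod_eq_iff)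
  also have "\<dots> = (\<Sum>r<dim_row M. \<Sum>s<dim_col M. \<Sum>v\<in>?V. if (f r, g s) = v then M $$ (r,s) else 0)"
    by (subst sum.swap) (subst sum.swap, rule refl)
  also have "\<dots> = (\<Sum>r<dim_row M. \<Sum>s<dim_col M. if (f r, g s) \<in> ?V then M $$ (r,s) else 0)"
    using fW by (intro sum.cong refl) (simp add: sum.delta)
  also have "\<dots> = mon M (fst \<circ> f) (fst \<circ> g) (x,y)"
  proof -
    have "\<And>r s. r < dim_row M \<Longrightarrow> s < dim_col M \<Longrightarrow> ((f r, g s) \<in> ?V) = (fst (f r) = x \<and> fst (g s) = y)"
      by (rule iffI, simp, rule IntI, rule image_eqI[where x="(r, s)" for r s], auto)
    then show ?thesis unfolding mon_def by (simp only: case_prod_conv comp_def) (intro sum.cong refl, simp)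
  qed
  finally show "proj1 (mon M f g) (x,y) = mon M (fst \<circ> f) (fst \<circ> g) (x,y)" .
qed

lemma proj2_mon: "proj2 (mon M f g) = mon M (snd \<circ> f) (snd \<circ> g)"
proof (intro ext, clarify)
  fix x y
  let ?W = "(\<lambda>(r,s). (f r, g s)) ` ({..<dim_row M} \<times> {..<dim_col M})"
  let ?V = "?W \<inter> {v. snd (fst v) = x \<and> snd (snd v) = y}"
  have fW: "finite ?V" by auto
  have "proj2 (mon M f g) (x,y) = (\<Sum>v\<in>?V. mon M f g v)"
    unfolding proj2_def using sum_V[OF _ mon_supp, where P="\<lambda>v. snd (fst v) = x \<and> snd (snd v) = y"]
    by simp
  also have "\<dots> = (\<Sum>v\<in>?V. \<Sum>r<dim_row M. \<Sum>s<dim_col M. if (f r, g s) = v then M $$ (r,s) else 0)"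
    unfolding mon_def by (intro sum.cong refl) (auto simp: prod_eq_iff)
  also have "\<dots> = (\<Sum>r<dim_row M. \<Sum>s<dim_col M. \<Sum>v\<in>?V. if (f r, g s) = v then M $$ (r,s) else 0)"
    by (subst sum.swap) (subst sum.swap, rule refl)
  also have "\<dots> = (\<Sum>r<dim_row M. \<Sum>s<dim_col M. if (f r, g s) \<in> ?V then M $$ (r,s) else 0)"
    using fW by (intro sum.cong refl) (simp add: sum.delta)
  also have "\<dots> = mon M (snd \<circ> f) (snd \<circ> g) (x,y)"
  proof -
    have "\<And>r s. r < dim_row M \<Longrightarrow> s < dim_col M \<Longrightarrow> ((f r, g s) \<in> ?V) = (snd (f r) = x \<and> snd (g s) = y)"
      by (rule iffI, simp, rule IntI, rule image_eqI[where x="(r, s)" for r s], auto)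
    then show ?thesis unfolding mon_def by (simp only: case_prod_conv comp_def) (intro sum.cong refl, simp)
  qed
  finally show "proj2 (mon M f g) (x,y) = mon M (snd \<circ> f) (snd \<circ> g) (x,y)" .
qed



lemma swap4: "(\<Sum>a\<in>A. \<Sum>c\<in>C. \<Sum>r\<in>R. \<Sum>s\<in>S. h a c r s) = (\<Sum>r\<in>R. \<Sum>s\<in>S. \<Sum>a\<in>A. \<Sum>c\<in>C. (h a c r s :: nat))"
proof -
  have "(\<Sum>a\<in>A. \<Sum>c\<in>C. \<Sum>r\<in>R. \<Sum>s\<in>S. h a c r s) = (\<Sum>a\<in>A. \<Sum>r\<in>R. \<Sum>c\<in>C. \<Sum>s\<in>S. h a c r s)"
    by (rule sum.cong[OF refl], rule sum.swap)
  also have "\<dots> = (\<Sum>r\<in>R. \<Sum>a\<in>A. \<Sum>c\<in>C. \<Sum>s\<in>S. h a c r s)" by (rule sum.swap)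
  also have "\<dots> = (\<Sum>r\<in>R. \<Sum>a\<in>A. \<Sum>s\<in>S. \<Sum>c\<in>C. h a c r s)"
    by (intro sum.cong refl, rule sum.swap)
  also have "\<dots> = (\<Sum>r\<in>R. \<Sum>s\<in>S. \<Sum>a\<in>A. \<Sum>c\<in>C. h a c r s)"
    by (intro sum.cong refl, rule sum.swap)
  finally show ?thesis .
qed

lemma mu_dims: "dim_row (mu k \<alpha>) = card (\<alpha> ` {..<k})" "dim_col (mu k \<alpha>) = k"
  unfolding mu_def by auto

lemma mu_entry: "i < card (\<alpha> ` {..<k}) \<Longrightarrow> j < k \<Longrightarrow> mu k \<alpha> $$ (i,j) = (if i = \<alpha> j then 1 else 0)"
  unfolding mu_def by simp

lemma N_entry:
  assumes "dim_row M = k" "dim_col M = l"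
    and "a < card (s1 ` {..<k})" "c < card (t1 ` {..<l})"
  shows "(mu k s1 * M * transpose_mat (mu l t1)) $$ (a,c) =
     (\<Sum>r<k. \<Sum>s<l. if s1 r = a \<and> t1 s = c then M $$ (r,s) else 0)"
proof -
  have P: "(mu k s1 * M) $$ (a,s) = (\<Sum>r<k. if s1 r = a then M $$ (r,s) else 0)" if "s < l" for s
    using assms that by (simp add: mu_dims mu_entry scalar_prod_def atLeast0LessThan)
      (intro sum.cong refl, auto)
  have "(mu k s1 * M * transpose_mat (mu l t1)) $$ (a,c) =
      (\<Sum>s<l. (mu k s1 * M) $$ (a,s) * (if c = t1 s then 1 else 0))"
    using assms by (simp add: mu_dims mu_entry scalar_prod_def atLeast0LessThan)
  also have "\<dots> = (\<Sum>s<l. \<Sum>r<k. if s1 r = a \<and> t1 s = c then M $$ (r,s) else 0)"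
    using P by (intro sum.cong refl) (auto simp: sum_distrib_right intro!: sum.cong)
  also have "\<dots> = (\<Sum>r<k. \<Sum>s<l. if s1 r = a \<and> t1 s = c then M $$ (r,s) else 0)"
    by (rule sum.swap)
  finally show ?thesis .
qed

lemma mon_mu:
  assumes "dim_row M = k" "dim_col M = l"
    and "\<forall>r<k. s1 r < card (s1 ` {..<k})" "\<forall>s<l. t1 s < card (t1 ` {..<l})"
  shows "mon (mu k s1 * M * transpose_mat (mu l t1)) f g = mon M (f \<circ> s1) (g \<circ> t1)"
proof (intro ext, clarify)
  fix x y
  let ?k1 = "card (s1 ` {..<k})" and ?l1 = "card (t1 ` {..<l})"
  have "mon (mu k s1 * M * transpose_mat (mu l t1)) f g (x,y) =
     (\<Sum>a<?k1. \<Sum>c<?l1. if f a = x \<and> g c = y then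
        (\<Sum>r<k. \<Sum>s<l. if s1 r = a \<and> t1 s = c then M $$ (r,s) else 0) else 0)"
    unfolding mon_def using assms by (simp add: mu_dims) (intro sum.cong refl, simp add: N_entry)
  also have "\<dots> = (\<Sum>a<?k1. \<Sum>c<?l1. \<Sum>r<k. \<Sum>s<l.
        if c = t1 s then (if a = s1 r then (if f a = x \<and> g c = y then M $$ (r,s) else 0) else 0) else 0)"
    by (intro sum.cong refl) (auto intro!: sum.cong)
  also have "\<dots> = (\<Sum>r<k. \<Sum>s<l. \<Sum>a<?k1. \<Sum>c<?l1.
        if c = t1 s then (if a = s1 r then (if f a = x \<and> g c = y then M $$ (r,s) else 0) else 0) else 0)"
    by (rule swap4)
  also have "\<dots> = (\<Sum>r<k. \<Sum>s<l. if f (s1 r) = x \<and> g (t1 s) = y then M $$ (r,s) else 0)"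
    using assms(3,4) by (intro sum.cong refl) (simp add: sum.delta')
  also have "\<dots> = mon M (f \<circ> s1) (g \<circ> t1) (x,y)"
    unfolding mon_def using assms by simp
  finally show "mon (mu k s1 * M * transpose_mat (mu l t1)) f g (x,y) = mon M (f \<circ> s1) (g \<circ> t1) (x,y)" .
qed



definition Seq :: "'a::linorder set \<Rightarrow> nat \<Rightarrow> 'a list set" where
  "Seq X n = {xs. length xs = n \<and> sorted_wrt (<) xs \<and> set xs \<subseteq> X}"

lemma ss_less:
  fixes xs :: "'a::linorder list"
  assumes "sorted_wrt (<) xs" "i < length xs" "j < length xs"
  shows "(xs!i < xs!j) = (i < j)"
proof -
  have "i < j \<Longrightarrow> xs!i < xs!j" using assms sorted_wrt_nth_less by blast
  moreover have "j < i \<Longrightarrow> xs!j < xs!i" using assms sorted_wrt_nth_less by blast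
  ultimately show ?thesis by (metis less_irrefl linorder_neqE not_less_iff_gr_or_eq)
qed

lemma ss_le:
  fixes xs :: "'a::linorder list"
  assumes "sorted_wrt (<) xs" "i < length xs" "j < length xs"
  shows "(xs!i \<le> xs!j) = (i \<le> j)"
  using ss_less[OF assms(1,3,2)] by (simp add: not_less[symmetric])

lemma ss_eq:
  fixes xs :: "'a::linorder list"
  assumes "sorted_wrt (<) xs" "i < length xs" "j < length xs"
  shows "(xs!i = xs!j) = (i = j)"
  using ss_le[OF assms] ss_le[OF assms(1,3,2)] by (metis order.antisym order.refl)

definition cl :: "'a::linorder list \<Rightarrow> 'a list" where
  "cl ys = sorted_list_of_set (set ys)"

definition idxf :: "'a::linorder list \<Rightarrow> nat \<Rightarrow> nat" where
  "idxf ys r = (if r < length ys then the_inv_into {..<length (cl ys)} (nth (cl ys)) (ys!r) else 0)"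

lemma cl_props: "sorted_wrt (<) (cl ys)" "set (cl ys) = set ys" "distinct (cl ys)"
  unfolding cl_def by (auto simp: strict_sorted_list_of_set)

lemma cl_inj: "inj_on (nth (cl ys)) {..<length (cl ys)}"
  using cl_props(3) by (intro inj_on_nth) auto

lemma cl_img: "nth (cl ys) ` {..<length (cl ys)} = set ys"
  using cl_props(2)[of ys] nth_image[of "length (cl ys)" "cl ys"] by (simp add: lessThan_atLeast0)

lemma idxf_props:
  assumes "r < length ys"
  shows "idxf ys r < length (cl ys)" "cl ys ! idxf ys r = ys ! r"
proof -
  have "ys ! r \<in> nth (cl ys) ` {..<length (cl ys)}" using assms unfolding cl_img by simp
  then show "idxf ys r < length (cl ys)" "cl ys ! idxf ys r = ys ! r"
    using assms the_inv_into_into[OF cl_inj, of "ys ! r" ys "{..<length (cl ys)}"] f_the_inv_into_f[OF cl_inj, of "ys ! r"]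
    unfolding idxf_def by auto
qed

lemma idxf_img: "idxf ys ` {..<length ys} = {..<length (cl ys)}"
proof
  show "idxf ys ` {..<length ys} \<subseteq> {..<length (cl ys)}" using idxf_props by auto
  show "{..<length (cl ys)} \<subseteq> idxf ys ` {..<length ys}"
  proof
    fix i assume i: "i \<in> {..<length (cl ys)}"
    then have "cl ys ! i \<in> set ys" using cl_img by blast
    then obtain r where r: "r < length ys" "ys ! r = cl ys ! i" by (auto simp: in_set_conv_nth)
    have "idxf ys r = i" using r i unfolding idxf_def
      by (simp add: the_inv_into_f_f[OF cl_inj])
    then show "i \<in> idxf ys ` {..<length ys}" using r by auto
  qed
qed

lemma idxf_out: "r \<ge> length ys \<Longrightarrow> idxf ys r = 0"
  unfolding idxf_def by simp

definition gmap :: "nat \<Rightarrow> (nat \<Rightarrow> nat) \<Rightarrow> (nat \<Rightarrow> nat) \<Rightarrow> 'a list \<Rightarrow> 'b list \<Rightarrow> ('a \<times> 'b) list" where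
  "gmap k s1 s2 as bs = map (\<lambda>r. (as ! s1 r, bs ! s2 r)) [0..<k]"

definition DD :: "'a::linorder set \<Rightarrow> 'b::linorder set \<Rightarrow> nat \<Rightarrow> ((nat \<Rightarrow> nat) \<times> (nat \<Rightarrow> nat) \<times> 'a list \<times> 'b list) set" where
  "DD X1 X2 k = {(s1,s2,as,bs). (s1,s2) \<in> Adm k \<and> as \<in> Seq X1 (card (s1 ` {..<k})) \<and> bs \<in> Seq X2 (card (s2 ` {..<k}))}"

lemma Adm_img:
  assumes "(s1,s2) \<in> Adm k"
  shows "s1 ` {..<k} = {..<card (s1 ` {..<k})}" "s2 ` {..<k} = {..<card (s2 ` {..<k})}"
proof -
  from assms obtain k1 k2 where "s1 ` {..<k} = {..<k1}" "s2 ` {..<k} = {..<k2}"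
    unfolding Adm_def by auto
  then show "s1 ` {..<k} = {..<card (s1 ` {..<k})}" "s2 ` {..<k} = {..<card (s2 ` {..<k})}"
    by simp_all
qed

lemma Adm_lt:
  assumes "(s1,s2) \<in> Adm k" "r < k"
  shows "s1 r < card (s1 ` {..<k})" "s2 r < card (s2 ` {..<k})"
proof -
  have "s1 r \<in> s1 ` {..<k}" "s2 r \<in> s2 ` {..<k}" using assms by auto
  then show "s1 r < card (s1 ` {..<k})" "s2 r < card (s2 ` {..<k})"
    using Adm_img[OF assms(1)] by (metis lessThan_iff)+
qed

lemma gmap_in:
  assumes "(s1,s2,as,bs) \<in> DD X1 X2 k"
  shows "gmap k s1 s2 as bs \<in> Seq (X1 \<times> X2) k"
proof -
  from assms have A: "(s1,s2) \<in> Adm k" and as: "as \<in> Seq X1 (card (s1 ` {..<k}))"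
    and bs: "bs \<in> Seq X2 (card (s2 ` {..<k}))" unfolding DD_def by auto
  have r1: "s1 r < length as" if "r < k" for r
    using Adm_lt(1)[OF A that] as unfolding Seq_def by simp
  have r2: "s2 r < length bs" if "r < k" for r
    using Adm_lt(2)[OF A that] bs unfolding Seq_def by simp
  have mono: "s1 i \<le> s1 j" and st: "s1 i = s1 j \<Longrightarrow> s2 i < s2 j" if "i < j" "j < k" for i j
    using A that unfolding Adm_def by auto
  have sa: "sorted_wrt (<) as" and sb: "sorted_wrt (<) bs" using as bs unfolding Seq_def by auto
  have "sorted_wrt (<) (gmap k s1 s2 as bs)"
    unfolding sorted_wrt_iff_nth_less gmap_def
  proof (intro allI impI)
    fix i j assume ij0: "i < j" "j < length (map (\<lambda>r. (as ! s1 r, bs ! s2 r)) [0..<k])"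
    then have ij: "i < j \<and> j < k" by simp
    have "as ! s1 i < as ! s1 j \<or> as ! s1 i \<le> as ! s1 j \<and> bs ! s2 i < bs ! s2 j"
    proof (cases "s1 i = s1 j")
      case True
      then show ?thesis using st[of i j] ij ss_less[OF sb r2 r2] by auto
    next
      case False
      then have "s1 i < s1 j" using mono[of i j] ij by auto
      then show ?thesis using ij ss_less[OF sa r1 r1] by auto
    qed
    then show "map (\<lambda>r. (as ! s1 r, bs ! s2 r)) [0..<k] ! i < map (\<lambda>r. (as ! s1 r, bs ! s2 r)) [0..<k] ! j"
      using ij by simp
  qed
  moreover have "set (gmap k s1 s2 as bs) \<subseteq> X1 \<times> X2"
  proof
    fix p assume "p \<in> set (gmap k s1 s2 as bs)"
    then obtain r where r: "r < k" "p = (as ! s1 r, bs ! s2 r)" unfolding gmap_def by auto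
    have "as ! s1 r \<in> set as" "bs ! s2 r \<in> set bs" using r1[OF r(1)] r2[OF r(1)] by simp_all
    then show "p \<in> X1 \<times> X2" using as bs r unfolding Seq_def by auto
  qed
  ultimately show ?thesis unfolding Seq_def gmap_def by simp
qed



lemma DD_facts:
  assumes "(s1,s2,as,bs) \<in> DD X1 X2 k"
  shows "s1 ` {..<k} = {..<length as}" "s2 ` {..<k} = {..<length bs}"
    "sorted_wrt (<) as" "sorted_wrt (<) bs"
    "\<forall>r<k. s1 r < length as" "\<forall>r<k. s2 r < length bs"
    "\<forall>r\<ge>k. s1 r = 0 \<and> s2 r = 0"
proof -
  from assms have A: "(s1,s2) \<in> Adm k" and as: "as \<in> Seq X1 (card (s1 ` {..<k}))"
    and bs: "bs \<in> Seq X2 (card (s2 ` {..<k}))" unfolding DD_def by auto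
  have la: "length as = card (s1 ` {..<k})" and lb: "length bs = card (s2 ` {..<k})"
    using as bs unfolding Seq_def by auto
  show "s1 ` {..<k} = {..<length as}" "s2 ` {..<k} = {..<length bs}"
    using Adm_img[OF A] la lb by simp_all
  show "sorted_wrt (<) as" "sorted_wrt (<) bs" using as bs unfolding Seq_def by auto
  show "\<forall>r<k. s1 r < length as" "\<forall>r<k. s2 r < length bs" using Adm_lt[OF A] la lb by auto
  show "\<forall>r\<ge>k. s1 r = 0 \<and> s2 r = 0" using A unfolding Adm_def by auto
qed

lemma set_gmap: "set (gmap k s1 s2 as bs) = (\<lambda>r. (as ! s1 r, bs ! s2 r)) ` {..<k}"
  unfolding gmap_def by auto

lemma DD_set:
  assumes "(s1,s2,as,bs) \<in> DD X1 X2 k"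
  shows "set as = fst ` set (gmap k s1 s2 as bs)" "set bs = snd ` set (gmap k s1 s2 as bs)"
proof -
  have "fst ` set (gmap k s1 s2 as bs) = nth as ` (s1 ` {..<k})"
    unfolding set_gmap image_image by simp
  also have "\<dots> = set as" using DD_facts(1)[OF assms] nth_image[of "length as" as]
    by (simp add: lessThan_atLeast0)
  finally show "set as = fst ` set (gmap k s1 s2 as bs)" by simp
  have "snd ` set (gmap k s1 s2 as bs) = nth bs ` (s2 ` {..<k})"
    unfolding set_gmap image_image by simp
  also have "\<dots> = set bs" using DD_facts(2)[OF assms] nth_image[of "length bs" bs]
    by (simp add: lessThan_atLeast0)
  finally show "set bs = snd ` set (gmap k s1 s2 as bs)" by simp
qed

lemma gmap_inj: "inj_on (\<lambda>(s1,s2,as,bs). gmap k s1 s2 as bs) (DD X1 X2 k)"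
proof (rule inj_onI)
  fix x y assume x: "x \<in> DD X1 X2 k" and y: "y \<in> DD X1 X2 k"
    and e: "(\<lambda>(s1,s2,as,bs). gmap k s1 s2 as bs) x = (\<lambda>(s1,s2,as,bs). gmap k s1 s2 as bs) y"
  obtain s1 s2 as bs where xe: "x = (s1,s2,as,bs)" by (cases x) auto
  obtain s1' s2' as' bs' where ye: "y = (s1',s2',as',bs')" by (cases y) auto
  have d: "(s1,s2,as,bs) \<in> DD X1 X2 k" and d': "(s1',s2',as',bs') \<in> DD X1 X2 k"
    and eq: "gmap k s1 s2 as bs = gmap k s1' s2' as' bs'" using x y e xe ye by auto
  note F = DD_facts[OF d] and F' = DD_facts[OF d']
  have "set as = set as'" using DD_set(1)[OF d] DD_set(1)[OF d'] eq by simp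
  then have aa: "as = as'" using strict_sorted_equal F(3) F'(3) by metis
  have "set bs = set bs'" using DD_set(2)[OF d] DD_set(2)[OF d'] eq by simp
  then have bb: "bs = bs'" using strict_sorted_equal F(4) F'(4) by metis
  have pt: "as ! s1 r = as' ! s1' r \<and> bs ! s2 r = bs' ! s2' r" if "r < k" for r
  proof -
    have "gmap k s1 s2 as bs ! r = gmap k s1' s2' as' bs' ! r" using eq by simp
    then show ?thesis using that unfolding gmap_def by simp
  qed
  have "s1 r = s1' r \<and> s2 r = s2' r" for r
  proof (cases "r < k")
    case True
    then show ?thesis using pt[OF True] aa bb ss_eq[OF F(3)] ss_eq[OF F(4)] F(5,6) F'(5,6)
      by auto
  next
    case False
    then show ?thesis using F(7) F'(7) by auto
  qed
  then show "x = y" using aa bb xe ye by auto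
qed

lemma gmap_surj: "(\<lambda>(s1,s2,as,bs). gmap k s1 s2 as bs) ` (DD X1 X2 k) = Seq (X1 \<times> X2) k"
proof
  show "(\<lambda>(s1,s2,as,bs). gmap k s1 s2 as bs) ` (DD X1 X2 k) \<subseteq> Seq (X1 \<times> X2) k"
    using gmap_in by auto
next
  show "Seq (X1 \<times> X2) k \<subseteq> (\<lambda>(s1,s2,as,bs). gmap k s1 s2 as bs) ` (DD X1 X2 k)"
  proof
    fix xs assume xs: "xs \<in> Seq (X1 \<times> X2) k"
    then have lx: "length xs = k" and sx: "sorted_wrt (<) xs" and sX: "set xs \<subseteq> X1 \<times> X2"
      unfolding Seq_def by auto
    define ys where "ys = map fst xs"
    define zs where "zs = map snd xs"
    define s1 where "s1 = idxf ys"
    define s2 where "s2 = idxf zs"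
    have ly: "length ys = k" "length zs = k" using lx unfolding ys_def zs_def by auto
    have P1: "s1 r < length (cl ys) \<and> cl ys ! s1 r = fst (xs ! r)" if "r < k" for r
      using idxf_props[of r ys] ly that unfolding s1_def ys_def by simp
    have P2: "s2 r < length (cl zs) \<and> cl zs ! s2 r = snd (xs ! r)" if "r < k" for r
      using idxf_props[of r zs] ly that unfolding s2_def zs_def by simp
    have I1: "s1 ` {..<k} = {..<length (cl ys)}" using idxf_img[of ys] ly unfolding s1_def by simp
    have I2: "s2 ` {..<k} = {..<length (cl zs)}" using idxf_img[of zs] ly unfolding s2_def by simp
    have lt: "xs ! i < xs ! j" if "i < j" "j < k" for i j
      using sorted_wrt_nth_less[OF sx that(1)] that lx by simp
    have mono: "s1 i \<le> s1 j" if "i < j" "j < k" for i j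
    proof -
      have "fst (xs ! i) \<le> fst (xs ! j)" using lt[OF that] by (cases "xs ! i", cases "xs ! j") auto
      then show ?thesis using P1[of i] P1[of j] that ss_le[OF cl_props(1), of "s1 i" ys "s1 j"] by auto
    qed
    have st: "s2 i < s2 j" if "i < j" "j < k" "s1 i = s1 j" for i j
    proof -
      have "fst (xs ! i) = fst (xs ! j)" using P1[of i] P1[of j] that by auto
      then have "snd (xs ! i) < snd (xs ! j)" using lt[OF that(1,2)]
        by (cases "xs ! i", cases "xs ! j") auto
      then show ?thesis using P2[of i] P2[of j] that ss_less[OF cl_props(1), of "s2 i" zs "s2 j"] by auto
    qed
    have out: "\<forall>i\<ge>k. s1 i = 0 \<and> s2 i = 0" using ly idxf_out[of ys] idxf_out[of zs] unfolding s1_def s2_def by auto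
    have adm: "(s1,s2) \<in> Adm k" unfolding Adm_def using I1 I2 mono st out by blast
    have c1: "card (s1 ` {..<k}) = length (cl ys)" using I1 by simp
    have c2: "card (s2 ` {..<k}) = length (cl zs)" using I2 by simp
    have "set (cl ys) \<subseteq> X1" using sX cl_props(2)[of ys] unfolding ys_def by auto
    then have a1: "cl ys \<in> Seq X1 (card (s1 ` {..<k}))" unfolding Seq_def using c1 cl_props(1) by auto
    have "set (cl zs) \<subseteq> X2" using sX cl_props(2)[of zs] unfolding zs_def by auto
    then have a2: "cl zs \<in> Seq X2 (card (s2 ` {..<k}))" unfolding Seq_def using c2 cl_props(1) by auto
    have inD: "(s1, s2, cl ys, cl zs) \<in> DD X1 X2 k" unfolding DD_def using adm a1 a2 by auto
    have "gmap k s1 s2 (cl ys) (cl zs) = xs"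
      by (rule nth_equalityI) (use lx P1 P2 in \<open>auto simp: gmap_def\<close>)
    then show "xs \<in> (\<lambda>(s1,s2,as,bs). gmap k s1 s2 as bs) ` (DD X1 X2 k)"
      using inD by force
  qed
qed

lemma gmap_bij: "bij_betw (\<lambda>(s1,s2,as,bs). gmap k s1 s2 as bs) (DD X1 X2 k) (Seq (X1 \<times> X2) k)"
  unfolding bij_betw_def using gmap_inj gmap_surj by blast



lemma Phi_Seq: "Phi M X Y m = of_nat (card {(is, js). is \<in> Seq X (dim_row M) \<and> js \<in> Seq Y (dim_col M) \<and> monom_of M is js = m})"
  unfolding Phi_def Seq_def by (rule arg_cong[where f="\<lambda>S. of_nat (card S)"]) auto

lemma finite_Adm: "finite (Adm k)"
proof -
  let ?F = "{f::nat\<Rightarrow>nat. \<forall>x. (x \<in> {..<k} \<longrightarrow> f x \<in> {..<k}) \<and> (x \<notin> {..<k} \<longrightarrow> f x = 0)}"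
  have fF: "finite ?F" by (rule finite_set_of_finite_funs) auto
  have "Adm k \<subseteq> ?F \<times> ?F"
  proof
    fix p assume p: "p \<in> Adm k"
    obtain s1 s2 where pe: "p = (s1,s2)" by (cases p)
    have A: "(s1,s2) \<in> Adm k" using p pe by simp
    have c1: "card (s1 ` {..<k}) \<le> k" "card (s2 ` {..<k}) \<le> k"
      using card_image_le[of "{..<k}" s1] card_image_le[of "{..<k}" s2] by auto
    have "s1 \<in> ?F" "s2 \<in> ?F" using Adm_lt[OF A] c1 A unfolding Adm_def
      by (auto simp: not_less) (meson less_le_trans)+
    then show "p \<in> ?F \<times> ?F" using pe by simp
  qed
  then show ?thesis using fF finite_subset by blast
qed

lemma monom_key:
  assumes "dim_row M = k" "dim_col M = l"
    and d: "(s1,s2,as,bs) \<in> DD X1 X2 k" and e: "(t1,t2,cs,ds) \<in> DD Y1 Y2 l"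
  shows "proj1 (monom_of M (gmap k s1 s2 as bs) (gmap l t1 t2 cs ds)) = monom_of (mu k s1 * M * transpose_mat (mu l t1)) as cs"
    "proj2 (monom_of M (gmap k s1 s2 as bs) (gmap l t1 t2 cs ds)) = monom_of (mu k s2 * M * transpose_mat (mu l t2)) bs ds"
proof -
  have A: "(s1,s2) \<in> Adm k" and B: "(t1,t2) \<in> Adm l" using d e unfolding DD_def by auto
  show "proj1 (monom_of M (gmap k s1 s2 as bs) (gmap l t1 t2 cs ds)) = monom_of (mu k s1 * M * transpose_mat (mu l t1)) as cs"
    unfolding monom_of_mon proj1_mon
    apply (subst mon_mu)
    using assms Adm_lt(1)[OF A] Adm_lt(1)[OF B] apply auto[4]
    by (rule mon_cong) (use assms in \<open>auto simp: gmap_def\<close>)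
  show "proj2 (monom_of M (gmap k s1 s2 as bs) (gmap l t1 t2 cs ds)) = monom_of (mu k s2 * M * transpose_mat (mu l t2)) bs ds"
    unfolding monom_of_mon proj2_mon
    apply (subst mon_mu)
    using assms Adm_lt(2)[OF A] Adm_lt(2)[OF B] apply auto[4]
    by (rule mon_cong) (use assms in \<open>auto simp: gmap_def\<close>)
qed



definition Pset :: "nat mat \<Rightarrow> ('x1::linorder) set \<Rightarrow> ('x2::linorder) set \<Rightarrow> ('y1::linorder) set \<Rightarrow> ('y2::linorder) set
   \<Rightarrow> ('x1 \<times> 'y1 \<Rightarrow> nat) \<Rightarrow> ('x2 \<times> 'y2 \<Rightarrow> nat) \<Rightarrow> (('x1 \<times> 'x2) list \<times> ('y1 \<times> 'y2) list) set" where
  "Pset M X1 X2 Y1 Y2 m1 m2 = {(is, js). is \<in> Seq (X1 \<times> X2) (dim_row M) \<and> js \<in> Seq (Y1 \<times> Y2) (dim_col M) \<and>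
     proj1 (monom_of M is js) = m1 \<and> proj2 (monom_of M is js) = m2}"

lemma finite_Pset:
  assumes pk: "packed M"
  shows "finite (Pset M X1 X2 Y1 Y2 m1 m2)"
proof (cases "Pset M X1 X2 Y1 Y2 m1 m2 = {}")
  case True then show ?thesis by simp
next
  case False
  let ?P = "Pset M X1 X2 Y1 Y2 m1 m2"
  let ?k = "dim_row M" and ?l = "dim_col M"
  from False obtain is0 js0 where p0: "(is0, js0) \<in> ?P" by auto
  have E1: "m1 = mon M (fst \<circ> nth is) (fst \<circ> nth js)" and E2: "m2 = mon M (snd \<circ> nth is) (snd \<circ> nth js)"
    if "(is, js) \<in> ?P" for "is" js
    using that unfolding Pset_def by (auto simp: monom_of_mon proj1_mon proj2_mon)
  have f1: "finite {v. m1 v \<noteq> 0}" using E1[OF p0] finite_mon_supp by metis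
  have f2: "finite {v. m2 v \<noteq> 0}" using E2[OF p0] finite_mon_supp by metis
  let ?S1 = "{v. m1 v \<noteq> 0}" and ?S2 = "{v. m2 v \<noteq> 0}"
  let ?SX = "(fst ` ?S1) \<times> (fst ` ?S2)" and ?SY = "(snd ` ?S1) \<times> (snd ` ?S2)"
  have sub: "?P \<subseteq> {is. set is \<subseteq> ?SX \<and> length is = ?k} \<times> {js. set js \<subseteq> ?SY \<and> length js = ?l}"
  proof
    fix pp assume pp: "pp \<in> ?P"
    obtain "is" js where ppe: "pp = (is, js)" by (cases pp)
    have p: "(is, js) \<in> ?P" using pp ppe by simp
    have li: "length is = ?k" and lj: "length js = ?l" using p unfolding Pset_def Seq_def by auto
    have "is ! r \<in> ?SX" if r: "r < ?k" for r
    proof -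
      obtain s where s: "s < ?l" "M $$ (r,s) \<noteq> 0" using pk r unfolding packed_def by blast
      have "m1 (fst (is ! r), fst (js ! s)) \<noteq> 0"
        using mon_ge[OF r s(1), of "fst \<circ> nth is" "fst \<circ> nth js"] E1[OF p] s by auto
      moreover have "m2 (snd (is ! r), snd (js ! s)) \<noteq> 0"
        using mon_ge[OF r s(1), of "snd \<circ> nth is" "snd \<circ> nth js"] E2[OF p] s by auto
      ultimately show ?thesis by (cases "is ! r") (auto simp: image_iff intro!: bexI[where x="(_, _)"])
    qed
    moreover have "js ! s \<in> ?SY" if s: "s < ?l" for s
    proof -
      obtain r where r: "r < ?k" "M $$ (r,s) \<noteq> 0" using pk s unfolding packed_def by blast
      have "m1 (fst (is ! r), fst (js ! s)) \<noteq> 0"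
        using mon_ge[OF r(1) s, of "fst \<circ> nth is" "fst \<circ> nth js"] E1[OF p] r by auto
      moreover have "m2 (snd (is ! r), snd (js ! s)) \<noteq> 0"
        using mon_ge[OF r(1) s, of "snd \<circ> nth is" "snd \<circ> nth js"] E2[OF p] r by auto
      ultimately show ?thesis by (cases "js ! s") (auto simp: image_iff intro!: bexI[where x="(_, _)"])
    qed
    ultimately have "set is \<subseteq> ?SX" "set js \<subseteq> ?SY"
      using li lj by (metis (no_types, lifting) in_set_conv_nth subsetI)+
    then show "pp \<in> {is. set is \<subseteq> ?SX \<and> length is = ?k} \<times> {js. set js \<subseteq> ?SY \<and> length js = ?l}"
      using li lj ppe by blast
  qed
  have "finite ?SX" "finite ?SY" using f1 f2 by auto
  then show ?thesis
    by (intro finite_subset[OF sub] finite_cartesian_product finite_lists_length_eq) (use f1 f2 in auto)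
qed

definition Aset :: "('x1 \<times> 'y1 \<Rightarrow> nat) \<Rightarrow> ('x2 \<times> 'y2 \<Rightarrow> nat) \<Rightarrow> (('x1 \<times> 'x2) \<times> ('y1 \<times> 'y2) \<Rightarrow> nat) set" where
  "Aset m1 m2 = {m. finite {v. m v \<noteq> 0} \<and> proj1 m = m1 \<and> proj2 m = m2}"

lemma proj1_ge:
  assumes "finite {v. m v \<noteq> 0}" "m v \<noteq> 0"
  shows "m v \<le> proj1 m (fst (fst v), fst (snd v))"
  unfolding proj1_def
  by (simp, rule member_le_sum) (use assms in \<open>auto intro: finite_subset\<close>)

lemma proj2_ge:
  assumes "finite {v. m v \<noteq> 0}" "m v \<noteq> 0"
  shows "m v \<le> proj2 m (snd (fst v), snd (snd v))"
  unfolding proj2_def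
  by (simp, rule member_le_sum) (use assms in \<open>auto intro: finite_subset\<close>)

lemma finite_Aset: "finite (Aset m1 m2)"
proof (cases "Aset m1 m2 = {}")
  case True then show ?thesis by simp
next
  case False
  then obtain m0 where m0: "m0 \<in> Aset m1 m2" by auto
  let ?S1 = "{v. m1 v \<noteq> 0}" and ?S2 = "{v. m2 v \<noteq> 0}"
  have fm0: "finite {v. m0 v \<noteq> 0}" using m0 unfolding Aset_def by auto
  have "?S1 \<subseteq> (\<lambda>v. (fst (fst v), fst (snd v))) ` {v. m0 v \<noteq> 0}"
  proof
    fix w assume "w \<in> ?S1"
    then have "proj1 m0 w \<noteq> 0" using m0 unfolding Aset_def by auto
    have "{v. m0 v \<noteq> 0 \<and> fst (fst v) = fst w \<and> fst (snd v) = snd w} \<noteq> {}"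
    proof
      assume "{v. m0 v \<noteq> 0 \<and> fst (fst v) = fst w \<and> fst (snd v) = snd w} = {}"
      then have "proj1 m0 w = 0" unfolding proj1_def split_beta by (metis sum.empty)
      with \<open>proj1 m0 w \<noteq> 0\<close> show False by simp
    qed
    then obtain v where "m0 v \<noteq> 0" "fst (fst v) = fst w" "fst (snd v) = snd w" by blast
    then show "w \<in> (\<lambda>v. (fst (fst v), fst (snd v))) ` {v. m0 v \<noteq> 0}"
      by (intro image_eqI[of _ _ v]) auto
  qed
  then have f1: "finite ?S1" using fm0 finite_subset by blast
  have "?S2 \<subseteq> (\<lambda>v. (snd (fst v), snd (snd v))) ` {v. m0 v \<noteq> 0}"
  proof
    fix w assume "w \<in> ?S2"
    then have "proj2 m0 w \<noteq> 0" using m0 unfolding Aset_def by auto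
    have "{v. m0 v \<noteq> 0 \<and> snd (fst v) = fst w \<and> snd (snd v) = snd w} \<noteq> {}"
    proof
      assume "{v. m0 v \<noteq> 0 \<and> snd (fst v) = fst w \<and> snd (snd v) = snd w} = {}"
      then have "proj2 m0 w = 0" unfolding proj2_def split_beta by (metis sum.empty)
      with \<open>proj2 m0 w \<noteq> 0\<close> show False by simp
    qed
    then obtain v where "m0 v \<noteq> 0" "snd (fst v) = fst w" "snd (snd v) = snd w" by blast
    then show "w \<in> (\<lambda>v. (snd (fst v), snd (snd v))) ` {v. m0 v \<noteq> 0}"
      by (intro image_eqI[of _ _ v]) auto
  qed
  then have f2: "finite ?S2" using fm0 finite_subset by blast
  let ?S = "(\<lambda>((a,c),(b,d)). ((a,b),(c,d))) ` (?S1 \<times> ?S2)"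
  let ?B = "\<Sum>w\<in>?S1. m1 w"
  have fS: "finite ?S" using f1 f2 by auto
  have sub: "Aset m1 m2 \<subseteq> {f. \<forall>x. (x \<in> ?S \<longrightarrow> f x \<in> {..?B}) \<and> (x \<notin> ?S \<longrightarrow> f x = 0)}"
  proof (clarify)
    fix m x assume m: "m \<in> Aset m1 m2"
    have fm: "finite {v. m v \<noteq> 0}" and p1: "proj1 m = m1" and p2: "proj2 m = m2"
      using m unfolding Aset_def by auto
    show "(x \<in> ?S \<longrightarrow> m x \<in> {..?B}) \<and> (x \<notin> ?S \<longrightarrow> m x = 0)"
    proof (cases "m x = 0")
      case True then show ?thesis by simp
    next
      case False
      have le1: "m x \<le> m1 (fst (fst x), fst (snd x))" using proj1_ge[OF fm False] p1 by simp
      have le2: "m x \<le> m2 (snd (fst x), snd (snd x))" using proj2_ge[OF fm False] p2 by simp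
      have i1: "(fst (fst x), fst (snd x)) \<in> ?S1" using le1 False by auto
      have i2: "(snd (fst x), snd (snd x)) \<in> ?S2" using le2 False by auto
      have "x \<in> ?S" using i1 i2
        by (intro image_eqI[of _ _ "((fst (fst x), fst (snd x)), (snd (fst x), snd (snd x)))"]) auto
      moreover have "m1 (fst (fst x), fst (snd x)) \<le> ?B" using i1 f1 by (intro member_le_sum) auto
      ultimately show ?thesis using le1 by auto
    qed
  qed
  show ?thesis by (rule finite_subset[OF sub], rule finite_set_of_finite_funs) (use fS in auto)
qed



lemma lhs_eq:
  assumes pk: "packed M"
  shows "iota (Phi M (X1 \<times> X2) (Y1 \<times> Y2)) (m1,m2) = of_nat (card (Pset M X1 X2 Y1 Y2 m1 m2))"
proof -
  let ?k = "dim_row M" and ?l = "dim_col M"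
  define fib where "fib m = {(is, js). is \<in> Seq (X1 \<times> X2) ?k \<and> js \<in> Seq (Y1 \<times> Y2) ?l \<and> monom_of M is js = m}" for m
  let ?P = "Pset M X1 X2 Y1 Y2 m1 m2"
  have sub: "fib m \<subseteq> ?P" if "m \<in> Aset m1 m2" for m
    using that unfolding fib_def Pset_def Aset_def by auto
  have U: "(\<Union>m\<in>Aset m1 m2. fib m) = ?P"
  proof
    show "(\<Union>m\<in>Aset m1 m2. fib m) \<subseteq> ?P" using sub by blast
    show "?P \<subseteq> (\<Union>m\<in>Aset m1 m2. fib m)"
    proof
      fix pp assume pp: "pp \<in> ?P"
      obtain "is" js where ppe: "pp = (is, js)" by (cases pp)
      have "monom_of M is js \<in> Aset m1 m2"
        using pp ppe finite_mon_supp unfolding Pset_def Aset_def monom_of_mon by auto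
      moreover have "pp \<in> fib (monom_of M is js)" using pp ppe unfolding Pset_def fib_def by auto
      ultimately show "pp \<in> (\<Union>m\<in>Aset m1 m2. fib m)" by blast
    qed
  qed
  have "iota (Phi M (X1 \<times> X2) (Y1 \<times> Y2)) (m1,m2) = (\<Sum>m\<in>Aset m1 m2. Phi M (X1 \<times> X2) (Y1 \<times> Y2) m)"
    unfolding iota_def Aset_def by simp
  also have "\<dots> = (\<Sum>m\<in>Aset m1 m2. of_nat (card (fib m)))"
    unfolding fib_def Phi_Seq by simp
  also have "\<dots> = of_nat (\<Sum>m\<in>Aset m1 m2. card (fib m))" by simp
  also have "(\<Sum>m\<in>Aset m1 m2. card (fib m)) = card (\<Union>m\<in>Aset m1 m2. fib m)"
  proof (rule card_UN_disjoint[symmetric])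
    show "finite (Aset m1 m2)" by (rule finite_Aset)
    show "\<forall>m\<in>Aset m1 m2. finite (fib m)"
      using sub finite_Pset[OF pk, of X1 X2 Y1 Y2 m1 m2] finite_subset by blast
    show "\<forall>m\<in>Aset m1 m2. \<forall>m'\<in>Aset m1 m2. m \<noteq> m' \<longrightarrow> fib m \<inter> fib m' = {}"
      unfolding fib_def by auto
  qed
  finally show ?thesis using U by simp
qed



lemma rhs_eq:
  fixes X1 :: "'x1::linorder set" and X2 :: "'x2::linorder set"
    and Y1 :: "'y1::linorder set" and Y2 :: "'y2::linorder set"
  assumes pk: "packed M"
  shows "(\<Sum>(s1, s2)\<in>Adm (dim_row M). \<Sum>(t1, t2)\<in>Adm (dim_col M).
       tensor (Phi (mu (dim_row M) s1 * M * transpose_mat (mu (dim_col M) t1)) X1 Y1)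
              (Phi (mu (dim_row M) s2 * M * transpose_mat (mu (dim_col M) t2)) X2 Y2) (m1,m2))
    = of_nat (card (Pset M X1 X2 Y1 Y2 m1 m2))"
proof -
  let ?k = "dim_row M" and ?l = "dim_col M"
  define N where "N s t = mu ?k s * M * transpose_mat (mu ?l t)" for s t
  define F1 where "F1 s1 t1 = {(as, cs). as \<in> Seq X1 (card (s1 ` {..<?k})) \<and> cs \<in> Seq Y1 (card (t1 ` {..<?l}))
      \<and> monom_of (N s1 t1) as cs = m1}" for s1 t1
  define F2 where "F2 s2 t2 = {(bs, ds). bs \<in> Seq X2 (card (s2 ` {..<?k})) \<and> ds \<in> Seq Y2 (card (t2 ` {..<?l}))
      \<and> monom_of (N s2 t2) bs ds = m2}" for s2 t2
  define G where "G p = (case p of ((s1,s2),(t1,t2)) \<Rightarrow> F1 s1 t1 \<times> F2 s2 t2)" for p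
  define Sig where "Sig = (SIGMA p:Adm ?k \<times> Adm ?l. G p)"
  define Psi where "Psi = (\<lambda>(((s1::nat\<Rightarrow>nat,s2::nat\<Rightarrow>nat),(t1::nat\<Rightarrow>nat,t2::nat\<Rightarrow>nat)),((as::'x1 list,cs::'y1 list),(bs::'x2 list,ds::'y2 list))).
       (gmap ?k s1 s2 as bs, gmap ?l t1 t2 cs ds))"
  let ?P = "Pset M X1 X2 Y1 Y2 m1 m2"
  have dN: "dim_row (N s t) = card (s ` {..<?k})" "dim_col (N s t) = card (t ` {..<?l})" for s t
    unfolding N_def by (simp_all add: mu_dims)
  have memSig: "(((s1,s2),(t1,t2)),((as,cs),(bs,ds))) \<in> Sig \<longleftrightarrow>
      (s1,s2,as,bs) \<in> DD X1 X2 ?k \<and> (t1,t2,cs,ds) \<in> DD Y1 Y2 ?l \<and>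
      monom_of (N s1 t1) as cs = m1 \<and> monom_of (N s2 t2) bs ds = m2" for s1 s2 t1 t2 as cs bs ds
    unfolding Sig_def G_def F1_def F2_def DD_def by auto
  have decomp: "\<exists>s1 s2 t1 t2 as cs bs ds. x = (((s1,s2),(t1,t2)),((as,cs),(bs,ds)))" for x :: "(((nat\<Rightarrow>nat) \<times> (nat\<Rightarrow>nat)) \<times> ((nat\<Rightarrow>nat) \<times> (nat\<Rightarrow>nat))) \<times> (('x1 list \<times> 'y1 list) \<times> ('x2 list \<times> 'y2 list))"
  proof -
    obtain p q where x: "x = (p,q)" by (cases x)
    obtain S T where p: "p = (S,T)" by (cases p)
    obtain s1 s2 where S: "S = (s1,s2)" by (cases S)
    obtain t1 t2 where T: "T = (t1,t2)" by (cases T)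
    obtain u v where q: "q = (u,v)" by (cases q)
    obtain as cs where u: "u = (as,cs)" by (cases u)
    obtain bs ds where v: "v = (bs,ds)" by (cases v)
    show ?thesis using x p S T q u v by blast
  qed
  have key: "proj1 (monom_of M (gmap ?k s1 s2 as bs) (gmap ?l t1 t2 cs ds)) = monom_of (N s1 t1) as cs"
      "proj2 (monom_of M (gmap ?k s1 s2 as bs) (gmap ?l t1 t2 cs ds)) = monom_of (N s2 t2) bs ds"
    if "(s1,s2,as,bs) \<in> DD X1 X2 ?k" "(t1,t2,cs,ds) \<in> DD Y1 Y2 ?l" for s1 s2 t1 t2 as cs bs ds
    using monom_key[OF refl refl that] unfolding N_def by auto
  have inj: "inj_on Psi Sig"
  proof (rule inj_onI)
    fix x y assume x: "x \<in> Sig" and y: "y \<in> Sig" and e: "Psi x = Psi y"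
    obtain s1 s2 t1 t2 as cs bs ds where xe: "x = (((s1,s2),(t1,t2)),((as,cs),(bs,ds)))" using decomp by blast
    obtain s1' s2' t1' t2' as' cs' bs' ds' where ye: "y = (((s1',s2'),(t1',t2')),((as',cs'),(bs',ds')))" using decomp by blast
    have eqs: "gmap ?k s1 s2 as bs = gmap ?k s1' s2' as' bs'" "gmap ?l t1 t2 cs ds = gmap ?l t1' t2' cs' ds'"
      using e xe ye unfolding Psi_def by simp_all
    have m: "(s1,s2,as,bs) \<in> DD X1 X2 ?k" "(t1,t2,cs,ds) \<in> DD Y1 Y2 ?l"
      using x xe memSig by simp_all
    have m': "(s1',s2',as',bs') \<in> DD X1 X2 ?k" "(t1',t2',cs',ds') \<in> DD Y1 Y2 ?l"
      using y ye memSig by simp_all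
    have "(s1,s2,as,bs) = (s1',s2',as',bs')"
      by (rule inj_onD[OF gmap_inj _ m(1) m'(1)]) (use eqs in simp)
    moreover have "(t1,t2,cs,ds) = (t1',t2',cs',ds')"
      by (rule inj_onD[OF gmap_inj _ m(2) m'(2)]) (use eqs in simp)
    ultimately show "x = y" using xe ye by auto
  qed
  have img: "Psi ` Sig = ?P"
  proof
    show "Psi ` Sig \<subseteq> ?P"
    proof
      fix z assume "z \<in> Psi ` Sig"
      then obtain x where x: "x \<in> Sig" and z: "z = Psi x" by blast
      obtain s1 s2 t1 t2 as cs bs ds where xe: "x = (((s1,s2),(t1,t2)),((as,cs),(bs,ds)))" using decomp by blast
      have d: "(s1,s2,as,bs) \<in> DD X1 X2 ?k" and e: "(t1,t2,cs,ds) \<in> DD Y1 Y2 ?l"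
        and c: "monom_of (N s1 t1) as cs = m1" "monom_of (N s2 t2) bs ds = m2"
        using x xe memSig by auto
      show "z \<in> ?P" using gmap_in[OF d] gmap_in[OF e] key[OF d e] c z xe
        unfolding Pset_def Psi_def by auto
    qed
    show "?P \<subseteq> Psi ` Sig"
    proof
      fix z assume z: "z \<in> ?P"
      obtain "is" js where ze: "z = (is, js)" by (cases z)
      have "is \<in> Seq (X1 \<times> X2) ?k" "js \<in> Seq (Y1 \<times> Y2) ?l" using z ze unfolding Pset_def by auto
      then have "is \<in> (\<lambda>(s1,s2,as,bs). gmap ?k s1 s2 as bs) ` DD X1 X2 ?k"
          "js \<in> (\<lambda>(s1,s2,as,bs). gmap ?l s1 s2 as bs) ` DD Y1 Y2 ?l"
        unfolding gmap_surj by simp_all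
      then obtain d e where d: "d \<in> DD X1 X2 ?k" "is = (\<lambda>(s1,s2,as,bs). gmap ?k s1 s2 as bs) d"
        and e: "e \<in> DD Y1 Y2 ?l" "js = (\<lambda>(s1,s2,as,bs). gmap ?l s1 s2 as bs) e"
        by blast
      obtain s1 s2 as bs where de: "d = (s1,s2,as,bs)" by (cases d rule: prod_cases4)
      obtain t1 t2 cs ds where ee: "e = (t1,t2,cs,ds)" by (cases e rule: prod_cases4)
      have dd: "(s1,s2,as,bs) \<in> DD X1 X2 ?k" and ed: "(t1,t2,cs,ds) \<in> DD Y1 Y2 ?l" using d e de ee by auto
      have "monom_of (N s1 t1) as cs = m1" "monom_of (N s2 t2) bs ds = m2"
        using key[OF dd ed] z ze d(2) e(2) de ee unfolding Pset_def by auto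
      then have "(((s1,s2),(t1,t2)),((as,cs),(bs,ds))) \<in> Sig" using memSig dd ed by auto
      moreover have "Psi (((s1,s2),(t1,t2)),((as,cs),(bs,ds))) = z"
        using ze d(2) e(2) de ee unfolding Psi_def by auto
      ultimately show "z \<in> Psi ` Sig" by force
    qed
  qed
  have bij: "bij_betw Psi Sig ?P" unfolding bij_betw_def using inj img by blast
  have fSig: "finite Sig" using bij_betw_finite[OF bij] finite_Pset[OF pk] by blast
  have fI: "finite (Adm ?k \<times> Adm ?l)" using finite_Adm by auto
  have fG: "\<forall>p\<in>Adm ?k \<times> Adm ?l. finite (G p)"
  proof
    fix p assume p: "p \<in> Adm ?k \<times> Adm ?l"
    have "G p \<subseteq> snd ` Sig" unfolding Sig_def using p by force
    then show "finite (G p)" using fSig finite_subset by blast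
  qed
  have inner: "tensor (Phi (N s1 t1) X1 Y1) (Phi (N s2 t2) X2 Y2) (m1,m2) = of_nat (card (G ((s1,s2),(t1,t2))))"
    for s1 s2 t1 t2
  proof -
    have "Phi (N s1 t1) X1 Y1 m1 = of_nat (card (F1 s1 t1))" unfolding Phi_Seq F1_def dN by simp
    moreover have "Phi (N s2 t2) X2 Y2 m2 = of_nat (card (F2 s2 t2))" unfolding Phi_Seq F2_def dN by simp
    ultimately show ?thesis unfolding tensor_def G_def by (simp add: card_cartesian_product)
  qed
  have "(\<Sum>(s1, s2)\<in>Adm ?k. \<Sum>(t1, t2)\<in>Adm ?l.
       tensor (Phi (mu ?k s1 * M * transpose_mat (mu ?l t1)) X1 Y1)
              (Phi (mu ?k s2 * M * transpose_mat (mu ?l t2)) X2 Y2) (m1,m2))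
      = (\<Sum>(s1, s2)\<in>Adm ?k. \<Sum>(t1, t2)\<in>Adm ?l. of_nat (card (G ((s1,s2),(t1,t2)))))"
    using inner unfolding N_def by simp
  also have "\<dots> = (\<Sum>S\<in>Adm ?k. \<Sum>T\<in>Adm ?l. of_nat (card (G (S,T))))"
    by (simp add: split_beta)
  also have "\<dots> = of_nat (\<Sum>p\<in>Adm ?k \<times> Adm ?l. card (G p))"
    by (simp add: sum.cartesian_product)
  also have "(\<Sum>p\<in>Adm ?k \<times> Adm ?l. card (G p)) = card Sig"
    unfolding Sig_def using card_SigmaI[OF fI fG] by simp
  also have "card Sig = card ?P" by (rule bij_betw_same_card[OF bij])
  finally show ?thesis .
qed


theorem mainTheorem15:
  fixes X1 :: "'x1::linorder set" and X2 :: "'x2::linorder set"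
    and Y1 :: "'y1::linorder set" and Y2 :: "'y2::linorder set"
    and M :: "nat mat"
  assumes "countable X1" and "countable X2" and "countable Y1" and "countable Y2"
    and "packed M"
  shows "iota (Phi M (X1 \<times> X2) (Y1 \<times> Y2)) = (\<lambda>mm.
    \<Sum>(s1, s2)\<in>Adm (dim_row M). \<Sum>(t1, t2)\<in>Adm (dim_col M).
       tensor (Phi (mu (dim_row M) s1 * M * transpose_mat (mu (dim_col M) t1)) X1 Y1)
              (Phi (mu (dim_row M) s2 * M * transpose_mat (mu (dim_col M) t2)) X2 Y2) mm)"
proof (rule ext)
  fix mm :: "('x1 \<times> 'y1 \<Rightarrow> nat) \<times> ('x2 \<times> 'y2 \<Rightarrow> nat)"
  obtain m1 m2 where mm: "mm = (m1, m2)" by (cases mm)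
  show "iota (Phi M (X1 \<times> X2) (Y1 \<times> Y2)) mm = (\<Sum>(s1, s2)\<in>Adm (dim_row M). \<Sum>(t1, t2)\<in>Adm (dim_col M).
       tensor (Phi (mu (dim_row M) s1 * M * transpose_mat (mu (dim_col M) t1)) X1 Y1)
              (Phi (mu (dim_row M) s2 * M * transpose_mat (mu (dim_col M) t2)) X2 Y2) mm)"
    unfolding mm by (rule trans[OF lhs_eq[OF assms(5)] rhs_eq[OF assms(5), symmetric]])
qed

end
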